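(* Let $f$ be a measurable map preserving a probability measure $\mu$, and fix $\tau>0$. Let $(U_n)$, $(V_n)$ be nested sequences of measurable sets with $V_n\subset U_n$, $\mu(V_n)>0$, $\mu(U_n)\to0$, and $\mu(U_n\setminus V_n)/\mu(U_n)\to0$ as $n\to\infty$. Then for every $k\in\mathbb{N}_0$, $$\big|\mu(\zeta_{U_n}=k)-\mu(\zeta_{V_n}=k)\big|\to0\quad\text{as }n\to\infty.$$
   Context: For a set $W$ of positive measure, $\zeta_W=\sum_{0\le j<\tau/\mu(W)}\mathbb{I}_W\circ f^j$. *)

theory Defs
  imports "HOL-Probability.Probability"
begin

definition zeta :: "'a measure \<Rightarrow> ('a \<Rightarrow> 'a) \<Rightarrow> real \<Rightarrow> 'a set \<Rightarrow> 'a \<Rightarrow> nat" where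
  "zeta M f \<tau> W x = (\<Sum>j \<in> {j::nat. real j < \<tau> / measure M W}. indicator W ((f ^^ j) x))"

end

theory Submission
  imports Defs
begin

lemma funpow_meas:
  assumes "f \<in> measurable M M" "distr M M f = M"
  shows "(f ^^ j) \<in> measurable M M \<and> distr M M (f ^^ j) = M"
proof (induction j)
  case 0
  then show ?case by (simp add: distr_id)
next
  case (Suc j)
  have m: "(f ^^ Suc j) \<in> measurable M M"
    using Suc assms(1) by (simp add: funpow_Suc_right measurable_comp)
  have "distr M M (f ^^ Suc j) = distr M M ((f ^^ j) \<circ> f)"
    by (simp only: funpow_Suc_right)
  also have "\<dots> = distr (distr M M f) M (f ^^ j)"
    using distr_distr[of "f ^^ j" M M f M] Suc assms(1) by simp
  also have "\<dots> = M" using Suc assms(2) by simp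
  finally show ?case using m by blast
qed

lemma zeta_set:
  assumes "a > 0"
  shows "{j::nat. real j < \<tau> / a} = {..<nat \<lceil>\<tau> / a\<rceil>}"
proof -
  have "real j < \<tau> / a \<longleftrightarrow> j < nat \<lceil>\<tau> / a\<rceil>" for j :: nat
    by (metis less_ceiling_iff of_int_of_nat_eq zless_nat_eq_int_zless)
  then show ?thesis by auto
qed

lemma meas_set:
  assumes "f \<in> measurable M M" "distr M M f = M" "W \<in> sets M"
  shows "{x \<in> space M. (\<Sum>j<N. indicator W ((f ^^ j) x) :: nat) = k} \<in> sets M"
proof -
  have fj: "\<And>j. (f ^^ j) \<in> measurable M M" using funpow_meas[OF assms(1,2)] by blast
  have "(\<lambda>x. (\<Sum>j<N. indicator W ((f ^^ j) x) :: real)) \<in> borel_measurable M"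
    using fj assms(3) by (intro borel_measurable_sum) (auto intro: measurable_compose[OF _ borel_measurable_indicator])
  then have "{x \<in> space M. (\<Sum>j<N. indicator W ((f ^^ j) x) :: real) = real k} \<in> sets M"
    by measurable
  moreover have eq: "(\<Sum>j<N. indicator W ((f ^^ j) x) :: real) = real (\<Sum>j<N. indicator W ((f ^^ j) x) :: nat)" for x
    by (simp add: of_nat_sum indicator_def)
  ultimately show ?thesis by (simp only: eq of_nat_eq_iff)
qed

lemma key_bound:
  assumes P: "prob_space M" and fm: "f \<in> measurable M M" and fd: "distr M M f = M"
    and tau: "\<tau> > 0" and UM: "U \<in> sets M" and VM: "V \<in> sets M" and VU: "V \<subseteq> U"
    and Vpos: "measure M V > 0"
  shows "\<bar>measure M {x \<in> space M. zeta M f \<tau> U x = k}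
           - measure M {x \<in> space M. zeta M f \<tau> V x = k}\<bar>
         \<le> 2 * \<tau> * (measure M (U - V) / measure M U) + measure M U"
proof -
  interpret prob_space M by (rule P)
  have fj: "\<And>j. (f ^^ j) \<in> measurable M M" and dj: "\<And>j. distr M M (f ^^ j) = M"
    using funpow_meas[OF fm fd] by blast+
  have pres: "measure M ((f ^^ j) -` A \<inter> space M) = measure M A" if "A \<in> sets M" for j A
    using measure_distr[OF fj[of j] that] dj[of j] by simp
  have pm: "(f ^^ j) -` A \<inter> space M \<in> sets M" if "A \<in> sets M" for j A
    using fj[of j] that by (simp add: measurable_sets)
  define a where "a = measure M U"
  define b where "b = measure M V"
  have ba: "b \<le> a" unfolding a_def b_def using VU UM by (rule finite_measure_mono)
  have bpos: "b > 0" using Vpos b_def by simp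
  have apos: "a > 0" using ba bpos by simp
  have UVm: "measure M (U - V) = a - b" unfolding a_def b_def
    using finite_measure_Diff[OF UM VM VU] .
  define NU where "NU = nat \<lceil>\<tau> / a\<rceil>"
  define NV where "NV = nat \<lceil>\<tau> / b\<rceil>"
  have zU: "zeta M f \<tau> U x = (\<Sum>j<NU. indicator U ((f ^^ j) x))" for x
    unfolding zeta_def a_def[symmetric] NU_def zeta_set[OF apos] ..
  have zV: "zeta M f \<tau> V x = (\<Sum>j<NV. indicator V ((f ^^ j) x))" for x
    unfolding zeta_def b_def[symmetric] NV_def zeta_set[OF bpos] ..
  have tab: "\<tau> / a \<le> \<tau> / b" using tau apos bpos ba by (simp add: frac_le)
  have NUV: "NU \<le> NV" unfolding NU_def NV_def using tab
    by (intro nat_mono ceiling_mono)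
  have NUub: "real NU \<le> \<tau> / a + 1"
  proof -
    have "0 < \<tau> / a" using tau apos by simp
    then have "0 \<le> \<lceil>\<tau> / a\<rceil>" by simp
    then show ?thesis using of_int_ceiling_le_add_one[of "\<tau> / a"] by (simp add: NU_def)
  qed
  have NVub: "real NV \<le> \<tau> / b + 1"
  proof -
    have "0 < \<tau> / b" using tau bpos by simp
    then have "0 \<le> \<lceil>\<tau> / b\<rceil>" by simp
    then show ?thesis using of_int_ceiling_le_add_one[of "\<tau> / b"] by (simp add: NV_def)
  qed
  have NUlb: "\<tau> / a \<le> real NU" unfolding NU_def
    by (rule real_nat_ceiling_ge)
  define D1 where "D1 = (\<Union>j\<in>{..<NU}. (f ^^ j) -` (U - V) \<inter> space M)"
  define D2 where "D2 = (\<Union>j\<in>{NU..<NV}. (f ^^ j) -` V \<inter> space M)"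
  have D1m: "D1 \<in> sets M" unfolding D1_def using pm UM VM by blast
  have D2m: "D2 \<in> sets M" unfolding D2_def using pm VM by blast
  have D1b: "measure M D1 \<le> real NU * (a - b)"
  proof -
    have "measure M D1 \<le> (\<Sum>j\<in>{..<NU}. measure M ((f ^^ j) -` (U - V) \<inter> space M))"
      unfolding D1_def using pm UM VM by (intro finite_measure_subadditive_finite) auto
    also have "\<dots> = real NU * (a - b)" using pres[of "U - V"] UM VM UVm by simp
    finally show ?thesis .
  qed
  have D2b: "measure M D2 \<le> (real NV - real NU) * b"
  proof -
    have "measure M D2 \<le> (\<Sum>j\<in>{NU..<NV}. measure M ((f ^^ j) -` V \<inter> space M))"
      unfolding D2_def using pm VM by (intro finite_measure_subadditive_finite) auto
    also have "\<dots> = (real NV - real NU) * b" using pres[of V] VM NUV b_def by (simp add: of_nat_diff)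
    finally show ?thesis .
  qed
  have same: "zeta M f \<tau> U x = zeta M f \<tau> V x" if x: "x \<in> space M" "x \<notin> D1 \<union> D2" for x
  proof -
    have e1: "indicator U ((f ^^ j) x) = (indicator V ((f ^^ j) x) :: nat)" if "j < NU" for j
      using x that VU unfolding D1_def by (auto simp: indicator_def)
    have e2: "indicator V ((f ^^ j) x) = (0 :: nat)" if "j \<in> {NU..<NV}" for j
      using x that unfolding D2_def by (auto simp: indicator_def)
    have "zeta M f \<tau> V x = (\<Sum>j<NU. indicator V ((f ^^ j) x)) + (\<Sum>j\<in>{NU..<NV}. indicator V ((f ^^ j) x))"
      unfolding zV using NUV
      by (metis atLeast0LessThan sum.atLeastLessThan_concat zero_le)
    also have "\<dots> = (\<Sum>j<NU. indicator U ((f ^^ j) x))" using e1 e2 by simp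
    finally show ?thesis using zU by simp
  qed
  define A where "A = {x \<in> space M. zeta M f \<tau> U x = k}"
  define B where "B = {x \<in> space M. zeta M f \<tau> V x = k}"
  have Am: "A \<in> sets M" unfolding A_def zU using meas_set[OF fm fd UM] .
  have Bm: "B \<in> sets M" unfolding B_def zV using meas_set[OF fm fd VM] .
  have Dm: "D1 \<union> D2 \<in> sets M" using D1m D2m by blast
  have AB: "A \<subseteq> B \<union> (D1 \<union> D2)" using same unfolding A_def B_def by auto
  have BA: "B \<subseteq> A \<union> (D1 \<union> D2)" using same unfolding A_def B_def by auto
  have sub: "measure M (X \<union> (D1 \<union> D2)) \<le> measure M X + measure M (D1 \<union> D2)" if "X \<in> sets M" for X
    using measure_subadditive[OF that Dm] emeasure_finite by simp
  have Db: "measure M (D1 \<union> D2) \<le> measure M D1 + measure M D2"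
    using measure_subadditive[OF D1m D2m] emeasure_finite by simp
  have "measure M A \<le> measure M B + measure M (D1 \<union> D2)"
    using finite_measure_mono[OF AB] Bm Dm sub[OF Bm] by fastforce
  moreover have "measure M B \<le> measure M A + measure M (D1 \<union> D2)"
    using finite_measure_mono[OF BA] Am Dm sub[OF Am] by fastforce
  ultimately have 1: "\<bar>measure M A - measure M B\<bar> \<le> measure M D1 + measure M D2"
    using Db by linarith
  have 2: "real NU * (a - b) \<le> (\<tau> / a + 1) * (a - b)"
    using NUub ba by (intro mult_right_mono) auto
  have 3: "(real NV - real NU) * b \<le> (\<tau> / b + 1 - \<tau> / a) * b"
    using NVub NUlb bpos by (intro mult_right_mono) auto
  have 4: "(\<tau> / a + 1) * (a - b) + (\<tau> / b + 1 - \<tau> / a) * b = 2 * \<tau> * ((a - b) / a) + a"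
    using apos bpos by (simp add: field_simps)
  have fin: "\<bar>measure M A - measure M B\<bar> \<le> 2 * \<tau> * ((a - b) / a) + a"
    using 1 2 3 4 D1b D2b by linarith
  show ?thesis
    using fin UVm unfolding A_def B_def a_def by simp
qed

theorem lemma5p6:
  fixes M :: "'a measure" and f :: "'a \<Rightarrow> 'a" and \<tau> :: real
    and U V :: "nat \<Rightarrow> 'a set"
  assumes "prob_space M"
    and "f \<in> measurable M M" and "distr M M f = M"
    and "\<tau> > 0"
    and "\<And>n. U n \<in> sets M" and "\<And>n. V n \<in> sets M"
    and "\<And>n. U (Suc n) \<subseteq> U n" and "\<And>n. V (Suc n) \<subseteq> V n"
    and "\<And>n. V n \<subseteq> U n"
    and "\<And>n. measure M (V n) > 0"
    and "(\<lambda>n. measure M (U n)) \<longlonglongrightarrow> 0"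
    and "(\<lambda>n. measure M (U n - V n) / measure M (U n)) \<longlonglongrightarrow> 0"
  shows "\<forall>k::nat. (\<lambda>n. \<bar>measure M {x \<in> space M. zeta M f \<tau> (U n) x = k}
                        - measure M {x \<in> space M. zeta M f \<tau> (V n) x = k}\<bar>) \<longlonglongrightarrow> 0"
proof
  fix k :: nat
  interpret prob_space M by (rule assms(1))
  have b: "norm (\<bar>measure M {x \<in> space M. zeta M f \<tau> (U n) x = k}
           - measure M {x \<in> space M. zeta M f \<tau> (V n) x = k}\<bar>)
         \<le> 2 * \<tau> * (measure M (U n - V n) / measure M (U n)) + measure M (U n)" for n
    using key_bound[OF assms(1-4) assms(5,6,9,10)] by simp
  have "(\<lambda>n. 2 * \<tau> * (measure M (U n - V n) / measure M (U n)) + measure M (U n)) \<longlonglongrightarrow> 2 * \<tau> * 0 + 0"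
    by (intro tendsto_intros assms(11,12))
  then have "(\<lambda>n. 2 * \<tau> * (measure M (U n - V n) / measure M (U n)) + measure M (U n)) \<longlonglongrightarrow> 0"
    by simp
  then show "(\<lambda>n. \<bar>measure M {x \<in> space M. zeta M f \<tau> (U n) x = k}
                        - measure M {x \<in> space M. zeta M f \<tau> (V n) x = k}\<bar>) \<longlonglongrightarrow> 0"
    by (rule Lim_null_comparison[OF always_eventually, OF allI, OF b])
qed

end
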